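(* Let $G$ be a simple graph and $S$ a $k$-simplicial set of $G$ such that both $G\setminus S$ and $G\setminus N_G[S]$ are $k$-shellable. Then $G$ is $k$-shellable.
   Context: $N_G(x)$ is the set of neighbours of $x$, $N_G[x]=N_G(x)\cup\{x\}$, $N_G[U]=\bigcup_{x\in U}N_G[x]$; $G\setminus U$ deletes the vertices of $U$ and incident edges; $G_U$ is the induced subgraph on $U$. A set $S$ of pairwise non-adjacent vertices of $G$ is a $k$-simplicial set if $G_{N_G[S]}$ is a complete $r$-partite graph (for some $r$) with $k$-element parts $S_1,\ldots,S_r$ such that for every part $S_l$ and every two vertices $x_i,x_j\in S_l$, $N_G(x_i)=N_G(x_j)$. A graph $H$ is $k$-shellable if its independence complex $\Delta_H$ (faces: sets of pairwise non-adjacent vertices) is. $\langle F_1,\ldots,F_s\rangle$ denotes the complex with facets $F_1,\dots,F_s$. A complex $\Gamma$ of dimension $d$ is $k$-shellable ($1\le k\le d+1$) if its facets can be ordered $F_1,\ldots,F_r$ such that for every $j=2,\ldots,r$, $\Gamma_j=\langle F_j\rangle\cap\langle F_1,\ldots,F_{j-1}\rangle$ satisfies (i) $\Gamma_j$ is generated by a nonempty set of faces of $\langle F_j\rangle$ of dimension $|F_j|-k-1$; (ii) if $\Gamma_j$ has more than one facet, then for every two distinct facets $\sigma,\tau$ of $\Gamma_j$, $F_j\subseteq\sigma\cup\tau$. *)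

theory Defs
  imports Main
begin

text \<open>Deleting a set U of vertices is
modelled by passing to the vertex set V - U (the edge relation is only ever
consulted between vertices of the current vertex set).\<close>

definition simple_graph :: "'a set \<Rightarrow> ('a \<Rightarrow> 'a \<Rightarrow> bool) \<Rightarrow> bool" where
  "simple_graph V E \<longleftrightarrow> finite V \<and> (\<forall>x y. E x y \<longrightarrow> x \<in> V \<and> y \<in> V)
     \<and> (\<forall>x y. E x y \<longrightarrow> E y x) \<and> (\<forall>x. \<not> E x x)"

definition nbhd :: "'a set \<Rightarrow> ('a \<Rightarrow> 'a \<Rightarrow> bool) \<Rightarrow> 'a \<Rightarrow> 'a set" where
  "nbhd V E x = {y \<in> V. E x y}"

definition closed_nbhd_set :: "'a set \<Rightarrow> ('a \<Rightarrow> 'a \<Rightarrow> bool) \<Rightarrow> 'a set \<Rightarrow> 'a set" where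
  "closed_nbhd_set V E U = (\<Union>x\<in>U. insert x (nbhd V E x))"

definition indep_complex :: "'a set \<Rightarrow> ('a \<Rightarrow> 'a \<Rightarrow> bool) \<Rightarrow> 'a set set" where
  "indep_complex V E = {F. F \<subseteq> V \<and> (\<forall>x\<in>F. \<forall>y\<in>F. \<not> E x y)}"

definition gen :: "'a set set \<Rightarrow> 'a set set" where
  "gen B = {F. \<exists>\<sigma>\<in>B. F \<subseteq> \<sigma>}"

definition facets :: "'a set set \<Rightarrow> 'a set set" where
  "facets \<Delta> = {F \<in> \<Delta>. \<forall>G\<in>\<Delta>. F \<subseteq> G \<longrightarrow> G = F}"

definition k_shellable :: "nat \<Rightarrow> 'a set set \<Rightarrow> bool" where
  "k_shellable k \<Delta> \<longleftrightarrow> 1 \<le> k \<and> (\<exists>F\<in>\<Delta>. k \<le> card F) \<and>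
    (\<exists>Fs :: 'a set list. distinct Fs \<and> set Fs = facets \<Delta> \<and>
      (\<forall>j. 0 < j \<and> j < length Fs \<longrightarrow>
        (let \<Gamma> = gen {Fs ! j} \<inter> gen (set (take j Fs)) in
          (\<exists>B. B \<noteq> {} \<and> (\<forall>\<sigma>\<in>B. \<sigma> \<subseteq> Fs ! j \<and> int (card \<sigma>) = int (card (Fs ! j)) - int k)
               \<and> \<Gamma> = gen B)
          \<and> (card (facets \<Gamma>) > 1 \<longrightarrow>
               (\<forall>\<sigma>\<in>facets \<Gamma>. \<forall>\<tau>\<in>facets \<Gamma>. \<sigma> \<noteq> \<tau> \<longrightarrow> Fs ! j \<subseteq> \<sigma> \<union> \<tau>)))))"

definition k_shellable_graph :: "nat \<Rightarrow> 'a set \<Rightarrow> ('a \<Rightarrow> 'a \<Rightarrow> bool) \<Rightarrow> bool" where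
  "k_shellable_graph k V E \<longleftrightarrow> k_shellable k (indep_complex V E)"

text \<open>k-simplicial set: S independent, and the induced graph on N[S] is complete
multipartite with parts (collected in P) of size k, vertices in a common part
having equal neighbourhoods in G.\<close>
definition k_simplicial :: "nat \<Rightarrow> 'a set \<Rightarrow> ('a \<Rightarrow> 'a \<Rightarrow> bool) \<Rightarrow> 'a set \<Rightarrow> bool" where
  "k_simplicial k V E S \<longleftrightarrow> S \<subseteq> V \<and> (\<forall>x\<in>S. \<forall>y\<in>S. \<not> E x y) \<and>
    (\<exists>P :: 'a set set. \<Union>P = closed_nbhd_set V E S
       \<and> (\<forall>A\<in>P. \<forall>B\<in>P. A \<noteq> B \<longrightarrow> A \<inter> B = {})
       \<and> (\<forall>A\<in>P. card A = k)
       \<and> (\<forall>A\<in>P. \<forall>B\<in>P. \<forall>x\<in>A. \<forall>y\<in>B. (E x y \<longleftrightarrow> A \<noteq> B))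
       \<and> (\<forall>A\<in>P. \<forall>x\<in>A. \<forall>y\<in>A. nbhd V E x = nbhd V E y))"

end

theory Submission
  imports Defs
begin

definition cnd :: "nat \<Rightarrow> 'a set \<Rightarrow> 'a set set \<Rightarrow> bool" where
  "cnd k F Prev \<longleftrightarrow> (let \<Gamma> = gen {F} \<inter> gen Prev in
          (\<exists>B. B \<noteq> {} \<and> (\<forall>\<sigma>\<in>B. \<sigma> \<subseteq> F \<and> int (card \<sigma>) = int (card F) - int k)
               \<and> \<Gamma> = gen B)
          \<and> (card (facets \<Gamma>) > 1 \<longrightarrow>
               (\<forall>\<sigma>\<in>facets \<Gamma>. \<forall>\<tau>\<in>facets \<Gamma>. \<sigma> \<noteq> \<tau> \<longrightarrow> F \<subseteq> \<sigma> \<union> \<tau>)))"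

lemma split_iff:
  "(\<forall>j. 0 < j \<and> j < length Fs \<longrightarrow> P (Fs ! j) (set (take j Fs))) \<longleftrightarrow>
   (\<forall>xs F ys. Fs = xs @ F # ys \<longrightarrow> xs \<noteq> [] \<longrightarrow> P F (set xs))"
proof
  assume H: "\<forall>j. 0 < j \<and> j < length Fs \<longrightarrow> P (Fs ! j) (set (take j Fs))"
  show "\<forall>xs F ys. Fs = xs @ F # ys \<longrightarrow> xs \<noteq> [] \<longrightarrow> P F (set xs)"
  proof (intro allI impI)
    fix xs F ys assume a: "Fs = xs @ F # ys" "xs \<noteq> []"
    then have "0 < length xs" "length xs < length Fs" by auto
    with H have "P (Fs ! length xs) (set (take (length xs) Fs))" by blast
    then show "P F (set xs)" using a by simp
  qed
next
  assume H: "\<forall>xs F ys. Fs = xs @ F # ys \<longrightarrow> xs \<noteq> [] \<longrightarrow> P F (set xs)"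
  show "\<forall>j. 0 < j \<and> j < length Fs \<longrightarrow> P (Fs ! j) (set (take j Fs))"
  proof (intro allI impI)
    fix j assume j: "0 < j \<and> j < length Fs"
    then have "Fs = take j Fs @ Fs ! j # drop (Suc j) Fs" by (simp add: id_take_nth_drop)
    moreover have "take j Fs \<noteq> []" using j by auto
    ultimately show "P (Fs ! j) (set (take j Fs))" using H by blast
  qed
qed

lemma ks_iff:
  "k_shellable k \<Delta> \<longleftrightarrow> 1 \<le> k \<and> (\<exists>F\<in>\<Delta>. k \<le> card F) \<and>
    (\<exists>Fs. distinct Fs \<and> set Fs = facets \<Delta> \<and>
      (\<forall>xs F ys. Fs = xs @ F # ys \<longrightarrow> xs \<noteq> [] \<longrightarrow> cnd k F (set xs)))"
proof -
  have "k_shellable k \<Delta> \<longleftrightarrow> 1 \<le> k \<and> (\<exists>F\<in>\<Delta>. k \<le> card F) \<and>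
    (\<exists>Fs. distinct Fs \<and> set Fs = facets \<Delta> \<and>
      (\<forall>j. 0 < j \<and> j < length Fs \<longrightarrow> cnd k (Fs ! j) (set (take j Fs))))"
    unfolding k_shellable_def cnd_def by (rule refl)
  then show ?thesis by (simp only: split_iff[where P = "cnd k"])
qed

lemma gen_Int: "gen {F} \<inter> gen X = gen ((\<lambda>G. F \<inter> G) ` X)"
  unfolding gen_def by (auto simp: image_def)

lemma gen_Un: "gen X \<union> gen Y = gen (X \<union> Y)"
  unfolding gen_def by blast

lemma gen_union_cong: "gen X = gen Y \<Longrightarrow> gen ((\<union>) S ` X) = gen ((\<union>) S ` Y)"
proof -
  assume h: "gen X = gen Y"
  have *: "gen ((\<union>) S ` A) \<subseteq> gen ((\<union>) S ` B)" if "gen A = gen B" for A B :: "'a set set"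
  proof
    fix Z assume "Z \<in> gen ((\<union>) S ` A)"
    then obtain x where x: "x \<in> A" "Z \<subseteq> S \<union> x" unfolding gen_def by auto
    have "x \<in> gen A" using x(1) unfolding gen_def by blast
    then have "x \<in> gen B" using that by simp
    then obtain y where "y \<in> B" "x \<subseteq> y" unfolding gen_def by auto
    then have "Z \<subseteq> S \<union> y" using x by blast
    then show "Z \<in> gen ((\<union>) S ` B)" using \<open>y \<in> B\<close> unfolding gen_def by blast
  qed
  show ?thesis by (rule equalityI[OF *[OF h] *[OF h[symmetric]]])
qed

lemma facets_gen:
  assumes "\<forall>\<sigma>\<in>B. finite \<sigma>" "\<forall>\<sigma>\<in>B. \<forall>\<tau>\<in>B. card \<sigma> = card \<tau>"
  shows "facets (gen B) = B"
proof (rule equalityI)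
  show "facets (gen B) \<subseteq> B"
  proof
    fix F assume F: "F \<in> facets (gen B)"
    then have "F \<in> gen B" unfolding facets_def by blast
    then obtain \<tau> where t: "\<tau> \<in> B" "F \<subseteq> \<tau>" unfolding gen_def by blast
    then have "\<tau> \<in> gen B" unfolding gen_def by blast
    then have "\<tau> = F" using F t(2) unfolding facets_def by blast
    then show "F \<in> B" using t by simp
  qed
next
  show "B \<subseteq> facets (gen B)"
  proof
    fix \<sigma> assume s: "\<sigma> \<in> B"
    have "G = \<sigma>" if G: "G \<in> gen B" "\<sigma> \<subseteq> G" for G
    proof -
      obtain \<tau> where t: "\<tau> \<in> B" "G \<subseteq> \<tau>" using G unfolding gen_def by blast
      have st: "\<sigma> \<subseteq> \<tau>" using G(2) t(2) by (rule subset_trans)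
      have "card \<sigma> = card \<tau>" using assms(2) s t(1) by blast
      then have "\<sigma> = \<tau>" using card_subset_eq[of \<tau> \<sigma>] assms(1) t(1) st by blast
      then show ?thesis using t G by blast
    qed
    moreover have "\<sigma> \<in> gen B" using s unfolding gen_def by blast
    ultimately show "\<sigma> \<in> facets (gen B)" unfolding facets_def by blast
  qed
qed

lemma cnd_join:
  assumes fS: "finite S" and fF: "finite F" and dF: "S \<inter> F = {}"
    and dP: "\<forall>G\<in>Prev. S \<inter> G = {}" and c: "cnd k F Prev"
  shows "cnd k (S \<union> F) ((\<union>) S ` Prev)"
proof -
  have cc: "(\<exists>B. B \<noteq> {} \<and> (\<forall>\<sigma>\<in>B. \<sigma> \<subseteq> F \<and> int (card \<sigma>) = int (card F) - int k)
               \<and> gen {F} \<inter> gen Prev = gen B)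
          \<and> (card (facets (gen {F} \<inter> gen Prev)) > 1 \<longrightarrow>
               (\<forall>\<sigma>\<in>facets (gen {F} \<inter> gen Prev). \<forall>\<tau>\<in>facets (gen {F} \<inter> gen Prev). \<sigma> \<noteq> \<tau> \<longrightarrow> F \<subseteq> \<sigma> \<union> \<tau>))"
    using c unfolding cnd_def Let_def .
  note ex = cc[THEN conjunct1] and ii = cc[THEN conjunct2]
  obtain B where B0: "B \<noteq> {} \<and> (\<forall>\<sigma>\<in>B. \<sigma> \<subseteq> F \<and> int (card \<sigma>) = int (card F) - int k)
               \<and> gen {F} \<inter> gen Prev = gen B" using ex by (rule exE)
  note B1 = B0[THEN conjunct1] and B2 = B0[THEN conjunct2, THEN conjunct1]
    and B3 = B0[THEN conjunct2, THEN conjunct2]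
  have finB: "\<forall>\<sigma>\<in>B. finite \<sigma>"
  proof
    fix \<sigma> assume "\<sigma> \<in> B"
    then have "\<sigma> \<subseteq> F" using B2 by simp
    then show "finite \<sigma>" using fF by (rule finite_subset)
  qed
  have cB: "\<forall>\<sigma>\<in>B. \<forall>\<tau>\<in>B. card \<sigma> = card \<tau>"
  proof (intro ballI)
    fix \<sigma> \<tau> assume "\<sigma> \<in> B" "\<tau> \<in> B"
    then have "int (card \<sigma>) = int (card \<tau>)" using B2 by simp
    then show "card \<sigma> = card \<tau>" by simp
  qed
  have fB: "facets (gen B) = B" using facets_gen[OF finB cB] .
  define B' where "B' = (\<union>) S ` B"
  have im: "(\<lambda>G. (S \<union> F) \<inter> G) ` ((\<union>) S ` Prev) = (\<union>) S ` ((\<lambda>G. F \<inter> G) ` Prev)"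
    unfolding image_image by (simp add: Un_Int_distrib)
  have e1: "gen {S \<union> F} \<inter> gen ((\<union>) S ` Prev) = gen ((\<union>) S ` ((\<lambda>G. F \<inter> G) ` Prev))"
    unfolding gen_Int im by (rule refl)
  have e2: "gen ((\<lambda>G. F \<inter> G) ` Prev) = gen B" using B3 unfolding gen_Int .
  have eq: "gen {S \<union> F} \<inter> gen ((\<union>) S ` Prev) = gen B'"
    unfolding e1 B'_def by (rule gen_union_cong[OF e2])
  have cardU: "card (S \<union> \<sigma>) = card S + card \<sigma>" if "\<sigma> \<subseteq> F" for \<sigma>
  proof -
    have "finite \<sigma>" using that fF by (rule finite_subset)
    moreover have "S \<inter> \<sigma> = {}" using dF that by blast
    ultimately show ?thesis using card_Un_disjoint[OF fS] by simp
  qed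
  have p1: "B' \<noteq> {}" using B1 unfolding B'_def by simp
  have p2: "\<forall>\<sigma>\<in>B'. \<sigma> \<subseteq> S \<union> F \<and> int (card \<sigma>) = int (card (S \<union> F)) - int k"
  proof
    fix \<sigma>' assume "\<sigma>' \<in> B'"
    then obtain \<sigma> where s: "\<sigma> \<in> B" "\<sigma>' = S \<union> \<sigma>" unfolding B'_def by blast
    have h: "\<sigma> \<subseteq> F" "int (card \<sigma>) = int (card F) - int k" using B2 s(1) by simp_all
    have "int (card \<sigma>') = int (card (S \<union> F)) - int k"
      using h cardU[OF h(1)] cardU[of F] s(2) by simp
    moreover have "\<sigma>' \<subseteq> S \<union> F" using h(1) s(2) by blast
    ultimately show "\<sigma>' \<subseteq> S \<union> F \<and> int (card \<sigma>') = int (card (S \<union> F)) - int k" by simp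
  qed
  have finB': "\<forall>\<sigma>\<in>B'. finite \<sigma>" using finB fS unfolding B'_def by simp
  have cB': "\<forall>\<sigma>\<in>B'. \<forall>\<tau>\<in>B'. card \<sigma> = card \<tau>"
  proof (intro ballI)
    fix \<sigma> \<tau> assume "\<sigma> \<in> B'" "\<tau> \<in> B'"
    then have "int (card \<sigma>) = int (card \<tau>)" using p2 by simp
    then show "card \<sigma> = card \<tau>" by simp
  qed
  have fB': "facets (gen B') = B'" using facets_gen[OF finB' cB'] .
  have finBB: "finite B"
  proof (rule finite_subset[of B "Pow F"])
    show "B \<subseteq> Pow F" using B2 by blast
    show "finite (Pow F)" using fF by simp
  qed
  have p3: "card B' > 1 \<longrightarrow> (\<forall>\<sigma>\<in>B'. \<forall>\<tau>\<in>B'. \<sigma> \<noteq> \<tau> \<longrightarrow> S \<union> F \<subseteq> \<sigma> \<union> \<tau>)"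
  proof
    assume "card B' > 1"
    moreover have "card B' \<le> card B" unfolding B'_def using finBB by (rule card_image_le)
    ultimately have "card B > 1" by simp
    then have ii': "\<forall>\<sigma>\<in>B. \<forall>\<tau>\<in>B. \<sigma> \<noteq> \<tau> \<longrightarrow> F \<subseteq> \<sigma> \<union> \<tau>" by (rule mp[OF ii[unfolded B3 fB]])
    show "\<forall>\<sigma>\<in>B'. \<forall>\<tau>\<in>B'. \<sigma> \<noteq> \<tau> \<longrightarrow> S \<union> F \<subseteq> \<sigma> \<union> \<tau>"
    proof (intro ballI impI)
      fix \<sigma>' \<tau>' assume a: "\<sigma>' \<in> B'" "\<tau>' \<in> B'" "\<sigma>' \<noteq> \<tau>'"
      obtain \<sigma> where s: "\<sigma> \<in> B" "\<sigma>' = S \<union> \<sigma>" using a(1) unfolding B'_def by blast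
      obtain \<tau> where t: "\<tau> \<in> B" "\<tau>' = S \<union> \<tau>" using a(2) unfolding B'_def by blast
      have "\<sigma> \<noteq> \<tau>" using a(3) s(2) t(2) by blast
      then have "F \<subseteq> \<sigma> \<union> \<tau>" using ii' s(1) t(1) by blast
      then show "S \<union> F \<subseteq> \<sigma>' \<union> \<tau>'" using s(2) t(2) by blast
    qed
  qed
  have "(\<exists>B. B \<noteq> {} \<and> (\<forall>\<sigma>\<in>B. \<sigma> \<subseteq> S \<union> F \<and> int (card \<sigma>) = int (card (S \<union> F)) - int k)
               \<and> gen {S \<union> F} \<inter> gen ((\<union>) S ` Prev) = gen B)"
    using p1 p2 eq by blast
  moreover have "card (facets (gen {S \<union> F} \<inter> gen ((\<union>) S ` Prev))) > 1 \<longrightarrow>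
     (\<forall>\<sigma>\<in>facets (gen {S \<union> F} \<inter> gen ((\<union>) S ` Prev)). \<forall>\<tau>\<in>facets (gen {S \<union> F} \<inter> gen ((\<union>) S ` Prev)).
        \<sigma> \<noteq> \<tau> \<longrightarrow> S \<union> F \<subseteq> \<sigma> \<union> \<tau>)"
    unfolding eq fB' by (rule p3)
  ultimately show ?thesis unfolding cnd_def Let_def by (rule conjI)
qed

lemma list_split:
  assumes "map f L1 @ L2 = xs @ F # ys"
  shows "(\<exists>a x b. L1 = a @ x # b \<and> xs = map f a \<and> F = f x) \<or> (\<exists>c d. L2 = c @ F # d \<and> xs = map f L1 @ c)"
proof -
  obtain us where us: "(map f L1 = xs @ us \<and> us @ L2 = F # ys) \<or> (map f L1 @ us = xs \<and> L2 = us @ F # ys)"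
    using assms append_eq_append_conv2 by metis
  then show ?thesis
  proof
    assume h: "map f L1 = xs @ us \<and> us @ L2 = F # ys"
    show ?thesis
    proof (cases us)
      case Nil then show ?thesis using h by auto
    next
      case (Cons u us')
      then have "map f L1 = xs @ F # us'" using h by auto
      then obtain a r where "L1 = a @ r" "xs = map f a" "F # us' = map f r"
        using map_eq_append_conv by metis
      then show ?thesis by (cases r) auto
    qed
  next
    assume "map f L1 @ us = xs \<and> L2 = us @ F # ys"
    then show ?thesis by auto
  qed
qed

lemma filter_split:
  "filter Q L = c @ F # d \<Longrightarrow> \<exists>a b. L = a @ F # b \<and> filter Q a = c \<and> Q F"
proof (induction L arbitrary: c)
  case Nil then show ?case by simp
next
  case (Cons x L)
  show ?case
  proof (cases "Q x")
    case True
    show ?thesis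
    proof (cases c)
      case Nil
      then show ?thesis using Cons.prems True by (intro exI[of _ "[]"] exI[of _ L]) auto
    next
      case (Cons c0 c')
      then have "filter Q L = c' @ F # d" "c0 = x" using Cons.prems True by auto
      then obtain a b where "L = a @ F # b" "filter Q a = c'" "Q F" using Cons.IH by blast
      then show ?thesis using Cons True \<open>c0 = x\<close> by (intro exI[of _ "x # a"] exI[of _ b]) auto
    qed
  next
    case False
    then have "filter Q L = c @ F # d" using Cons.prems by simp
    then obtain a b where "L = a @ F # b" "filter Q a = c" "Q F" using Cons.IH by blast
    then show ?thesis using False by (intro exI[of _ "x # a"] exI[of _ b]) auto
  qed
qed

lemma facet_iff:
  assumes "simple_graph V E"
  shows "F \<in> facets (indep_complex W E) \<longleftrightarrow> F \<in> indep_complex W E \<and> (\<forall>y\<in>W. y \<notin> F \<longrightarrow> (\<exists>f\<in>F. E f y))"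
proof
  assume F: "F \<in> facets (indep_complex W E)"
  have "\<exists>f\<in>F. E f y" if "y \<in> W" "y \<notin> F" for y
  proof (rule ccontr)
    assume "\<not> (\<exists>f\<in>F. E f y)"
    then have "insert y F \<in> indep_complex W E"
      using F that assms unfolding facets_def indep_complex_def simple_graph_def by auto
    then show False using F that unfolding facets_def by auto
  qed
  then show "F \<in> indep_complex W E \<and> (\<forall>y\<in>W. y \<notin> F \<longrightarrow> (\<exists>f\<in>F. E f y))"
    using F unfolding facets_def by auto
next
  assume h: "F \<in> indep_complex W E \<and> (\<forall>y\<in>W. y \<notin> F \<longrightarrow> (\<exists>f\<in>F. E f y))"
  show "F \<in> facets (indep_complex W E)"
    unfolding facets_def
  proof (intro CollectI conjI ballI impI)
    show "F \<in> indep_complex W E" using h by simp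
    fix G assume G: "G \<in> indep_complex W E" "F \<subseteq> G"
    show "G = F"
    proof (rule ccontr)
      assume "G \<noteq> F"
      then obtain y where "y \<in> G" "y \<notin> F" using G by auto
      then show False using h G unfolding indep_complex_def by blast
    qed
  qed
qed

lemma facet_exists:
  assumes "finite W" "X \<in> indep_complex W E"
  shows "\<exists>F\<in>facets (indep_complex W E). X \<subseteq> F"
proof -
  have fin: "finite {Y \<in> indep_complex W E. X \<subseteq> Y}"
    by (rule finite_subset[of _ "Pow W"]) (use assms in \<open>auto simp: indep_complex_def\<close>)
  obtain m where m: "m \<in> {Y \<in> indep_complex W E. X \<subseteq> Y}" "X \<subseteq> m"
    "\<forall>b\<in>{Y \<in> indep_complex W E. X \<subseteq> Y}. m \<le> b \<longrightarrow> m = b"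
    using finite_has_maximal2[OF fin, of X] assms by auto
  then have "m \<in> facets (indep_complex W E)" unfolding facets_def by auto
  then show ?thesis using m by auto
qed

theorem theorem4p6:
  fixes V :: "'a set" and E :: "'a \<Rightarrow> 'a \<Rightarrow> bool" and S :: "'a set" and k :: nat
  assumes "simple_graph V E"
    and "k_simplicial k V E S"
    and "k_shellable_graph k (V - S) E"
    and "k_shellable_graph k (V - closed_nbhd_set V E S) E"
  shows "k_shellable_graph k V E"
proof (cases "S = {}")
  case True
  then have "closed_nbhd_set V E S = {}" unfolding closed_nbhd_set_def by simp
  then show ?thesis using assms(3) True by simp
next
  case False
  then obtain x0 where x0: "x0 \<in> S" by blast
  have sg: "finite V \<and> (\<forall>x y. E x y \<longrightarrow> x \<in> V \<and> y \<in> V)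
     \<and> (\<forall>x y. E x y \<longrightarrow> E y x) \<and> (\<forall>x. \<not> E x x)"
    using assms(1) unfolding simple_graph_def .
  have finV: "finite V" using sg by (rule conjunct1)
  have EV: "\<And>x y. E x y \<Longrightarrow> x \<in> V \<and> y \<in> V" using sg[THEN conjunct2, THEN conjunct1] by simp
  have Esym: "\<And>x y. E x y \<Longrightarrow> E y x" using sg[THEN conjunct2, THEN conjunct2, THEN conjunct1] by simp
  have Eirr: "\<And>x. \<not> E x x" using sg[THEN conjunct2, THEN conjunct2, THEN conjunct2] by simp
  have ks: "S \<subseteq> V \<and> (\<forall>x\<in>S. \<forall>y\<in>S. \<not> E x y) \<and>
    (\<exists>P :: 'a set set. \<Union>P = closed_nbhd_set V E S
       \<and> (\<forall>A\<in>P. \<forall>B\<in>P. A \<noteq> B \<longrightarrow> A \<inter> B = {})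
       \<and> (\<forall>A\<in>P. card A = k)
       \<and> (\<forall>A\<in>P. \<forall>B\<in>P. \<forall>x\<in>A. \<forall>y\<in>B. (E x y \<longleftrightarrow> A \<noteq> B))
       \<and> (\<forall>A\<in>P. \<forall>x\<in>A. \<forall>y\<in>A. nbhd V E x = nbhd V E y))"
    using assms(2) unfolding k_simplicial_def .
  have SV: "S \<subseteq> V" using ks by (rule conjunct1)
  have Sind: "\<forall>x\<in>S. \<forall>y\<in>S. \<not> E x y" using ks[THEN conjunct2] by (rule conjunct1)
  obtain P where PP: "\<Union>P = closed_nbhd_set V E S
       \<and> (\<forall>A\<in>P. \<forall>B\<in>P. A \<noteq> B \<longrightarrow> A \<inter> B = {})
       \<and> (\<forall>A\<in>P. card A = k)
       \<and> (\<forall>A\<in>P. \<forall>B\<in>P. \<forall>x\<in>A. \<forall>y\<in>B. (E x y \<longleftrightarrow> A \<noteq> B))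
       \<and> (\<forall>A\<in>P. \<forall>x\<in>A. \<forall>y\<in>A. nbhd V E x = nbhd V E y)"
    using ks[THEN conjunct2, THEN conjunct2] by (rule exE)
  note P1 = PP[THEN conjunct1] and P2 = PP[THEN conjunct2, THEN conjunct1]
    and P3 = PP[THEN conjunct2, THEN conjunct2, THEN conjunct1]
    and P4 = PP[THEN conjunct2, THEN conjunct2, THEN conjunct2, THEN conjunct1]
    and P5 = PP[THEN conjunct2, THEN conjunct2, THEN conjunct2, THEN conjunct2]
  define N where "N = closed_nbhd_set V E S"
  have PN: "\<Union>P = N" using P1 N_def by simp
  have Nmem: "y \<in> N \<longleftrightarrow> y \<in> S \<or> (\<exists>s\<in>S. y \<in> V \<and> E s y)" for y
    unfolding N_def closed_nbhd_set_def nbhd_def by blast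
  have NV: "N \<subseteq> V" using Nmem SV by blast
  have SN: "S \<subseteq> N" using Nmem by blast
  obtain A0 where A0: "A0 \<in> P" "x0 \<in> A0" using x0 SN PN by blast
  have SA0: "S \<subseteq> A0"
  proof
    fix s assume s: "s \<in> S"
    then obtain A' where A': "A' \<in> P" "s \<in> A'" using SN PN by blast
    have "\<not> E x0 s" using Sind x0 s by blast
    then have "A0 = A'" using P4 A0 A' by blast
    then show "s \<in> A0" using A' by simp
  qed
  have A0S: "A0 \<subseteq> S"
  proof
    fix a assume a: "a \<in> A0"
    then have "a \<in> N" using PN A0 by blast
    then have "a \<in> S \<or> (\<exists>s\<in>S. E s a)" using Nmem by blast
    moreover have "\<not> E s a" if "s \<in> S" for s using P4 A0 a SA0 that by blast
    ultimately show "a \<in> S" by blast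
  qed
  have SP: "S \<in> P" using SA0 A0S A0 by simp
  have cardS: "card S = k" using P3 SP by simp
  have finS: "finite S" using SV finV by (rule finite_subset)
  have K1: "E s y \<longleftrightarrow> y \<in> N \<and> y \<notin> S" if s: "s \<in> S" for s y
  proof
    assume e: "E s y"
    then have "y \<in> V" using EV by blast
    then have "y \<in> N" using Nmem s e by blast
    moreover have "y \<notin> S" using Sind s e by blast
    ultimately show "y \<in> N \<and> y \<notin> S" by simp
  next
    assume y: "y \<in> N \<and> y \<notin> S"
    then obtain A where A: "A \<in> P" "y \<in> A" using PN by blast
    then have "A \<noteq> S" using y by blast
    then show "E s y" using P4 A SP s by blast
  qed
  define D where "D = indep_complex V E"
  define D1 where "D1 = indep_complex (V - N) E"
  define D2 where "D2 = indep_complex (V - S) E"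
  have iD: "X \<in> D \<longleftrightarrow> X \<subseteq> V \<and> (\<forall>x\<in>X. \<forall>y\<in>X. \<not> E x y)" for X
    unfolding D_def indep_complex_def by simp
  have iD1: "X \<in> D1 \<longleftrightarrow> X \<subseteq> V - N \<and> (\<forall>x\<in>X. \<forall>y\<in>X. \<not> E x y)" for X
    unfolding D1_def indep_complex_def by simp
  have iD2: "X \<in> D2 \<longleftrightarrow> X \<subseteq> V - S \<and> (\<forall>x\<in>X. \<forall>y\<in>X. \<not> E x y)" for X
    unfolding D2_def indep_complex_def by simp
  have fD: "X \<in> facets D \<longleftrightarrow> X \<in> D \<and> (\<forall>y\<in>V. y \<notin> X \<longrightarrow> (\<exists>f\<in>X. E f y))" for X
    unfolding D_def by (rule facet_iff[OF assms(1)])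
  have fD1: "X \<in> facets D1 \<longleftrightarrow> X \<in> D1 \<and> (\<forall>y\<in>V - N. y \<notin> X \<longrightarrow> (\<exists>f\<in>X. E f y))" for X
    unfolding D1_def by (rule facet_iff[OF assms(1)])
  have fD2: "X \<in> facets D2 \<longleftrightarrow> X \<in> D2 \<and> (\<forall>y\<in>V - S. y \<notin> X \<longrightarrow> (\<exists>f\<in>X. E f y))" for X
    unfolding D2_def by (rule facet_iff[OF assms(1)])
  have partmax: "A \<subseteq> G" if G: "G \<in> facets D2" and A: "A \<in> P" "A \<noteq> S" and z: "z \<in> G" "z \<in> A" for G A z
  proof
    fix a assume a: "a \<in> A"
    show "a \<in> G"
    proof (rule ccontr)
      assume aG: "a \<notin> G"
      have "a \<in> N" using PN A a by blast
      moreover have "a \<notin> S" using P2 A SP a by blast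
      ultimately have "a \<in> V - S" using NV by blast
      then obtain f where f: "f \<in> G" "E f a" using fD2 G aG by blast
      have "f \<in> nbhd V E a" using f EV Esym unfolding nbhd_def by blast
      moreover have "nbhd V E a = nbhd V E z" using P5 A a z by blast
      ultimately have "E z f" unfolding nbhd_def by blast
      moreover have "G \<in> D2" using G fD2 by blast
      ultimately show False using iD2 z f by blast
    qed
  qed
  have partin: "F \<inter> N \<subseteq> A" if F: "F \<in> D2" and y: "y \<in> F" "y \<in> A" and A: "A \<in> P" for F y A
  proof
    fix w assume w: "w \<in> F \<inter> N"
    then obtain A' where A': "A' \<in> P" "w \<in> A'" using PN by blast
    have "\<not> E y w" using F y w iD2 by blast
    then have "A = A'" using P4 A A' y by blast
    then show "w \<in> A" using A' by simp
  qed
  have partF: "\<exists>A\<in>P. A \<noteq> S \<and> F \<inter> N = A" if F: "F \<in> facets D2" "F \<inter> N \<noteq> {}" for F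
  proof -
    obtain y where y: "y \<in> F" "y \<in> N" using F by blast
    obtain A where A: "A \<in> P" "y \<in> A" using y PN by blast
    have FD2: "F \<in> D2" using F fD2 by blast
    have "y \<notin> S" using FD2 iD2 y by blast
    then have AS: "A \<noteq> S" using A by blast
    have "A \<subseteq> F" using partmax[OF F(1) A(1) AS y(1) A(2)] .
    moreover have "A \<subseteq> N" using PN A by blast
    moreover have "F \<inter> N \<subseteq> A" using partin[OF FD2 y(1) A(2) A(1)] .
    ultimately show ?thesis using A AS by blast
  qed
  have ksD1: "k_shellable k D1" using assms(4) unfolding k_shellable_graph_def D1_def N_def .
  have ksD2: "k_shellable k D2" using assms(3) unfolding k_shellable_graph_def D2_def .
  have k1: "1 \<le> k" using ksD2 unfolding k_shellable_def by blast
  obtain L1 where L1: "distinct L1" "set L1 = facets D1"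
    "\<forall>xs F ys. L1 = xs @ F # ys \<longrightarrow> xs \<noteq> [] \<longrightarrow> cnd k F (set xs)"
    using ksD1 unfolding ks_iff by blast
  obtain L2 where L2: "distinct L2" "set L2 = facets D2"
    "\<forall>xs F ys. L2 = xs @ F # ys \<longrightarrow> xs \<noteq> [] \<longrightarrow> cnd k F (set xs)"
    using ksD2 unfolding ks_iff by blast
  have D1sub: "F' \<subseteq> V - N" if "F' \<in> facets D1" for F'
    using that fD1 iD1 by blast
  have D1S: "S \<inter> F' = {}" if "F' \<in> facets D1" for F'
    using D1sub[OF that] SN by blast
  have T1: "S \<union> F' \<in> facets D" if F': "F' \<in> facets D1" for F'
  proof -
    have F'1: "F' \<in> D1" using F' fD1 by blast
    have "S \<union> F' \<in> D"
      unfolding iD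
    proof (intro conjI ballI)
      show "S \<union> F' \<subseteq> V" using SV D1sub[OF F'] by blast
      fix x y assume xy: "x \<in> S \<union> F'" "y \<in> S \<union> F'"
      show "\<not> E x y"
      proof
        assume e: "E x y"
        have "x \<in> S \<and> y \<in> S \<or> x \<in> S \<and> y \<in> F' \<or> x \<in> F' \<and> y \<in> S \<or> x \<in> F' \<and> y \<in> F'" using xy by blast
        moreover have "\<not> (x \<in> S \<and> y \<in> S)" using Sind e by blast
        moreover have "\<not> (x \<in> S \<and> y \<in> F')" using K1 e D1sub[OF F'] by blast
        moreover have "\<not> (x \<in> F' \<and> y \<in> S)" using K1 Esym[OF e] D1sub[OF F'] by blast
        moreover have "\<not> (x \<in> F' \<and> y \<in> F')" using F'1 iD1 e by blast
        ultimately show False by blast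
      qed
    qed
    moreover have "\<exists>f\<in>S \<union> F'. E f y" if y: "y \<in> V" "y \<notin> S \<union> F'" for y
    proof (cases "y \<in> N")
      case True
      then have "E x0 y" using K1[OF x0] y by blast
      then show ?thesis using x0 by blast
    next
      case False
      then have "\<exists>f\<in>F'. E f y" using F' fD1 y by blast
      then show ?thesis by blast
    qed
    ultimately show ?thesis using fD by blast
  qed
  have T2: "F \<in> facets D" if F: "F \<in> facets D2" "F \<inter> N \<noteq> {}" for F
  proof -
    have F2: "F \<in> D2" using F fD2 by blast
    then have "F \<in> D" using iD iD2 by blast
    moreover have "\<exists>f\<in>F. E f y" if y: "y \<in> V" "y \<notin> F" for y
    proof (cases "y \<in> S")
      case True
      obtain z where z: "z \<in> F" "z \<in> N" using F by blast
      have "z \<notin> S" using F2 iD2 z by blast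
      then have "E y z" using K1[OF True] z by blast
      then show ?thesis using z Esym by blast
    next
      case False
      then show ?thesis using F fD2 y by blast
    qed
    ultimately show ?thesis using fD by blast
  qed
  have T3: "(\<exists>F'\<in>facets D1. F = S \<union> F') \<or> (F \<in> facets D2 \<and> F \<inter> N \<noteq> {})" if F: "F \<in> facets D" for F
  proof -
  have FD: "F \<in> D" and Fmax: "\<forall>y\<in>V. y \<notin> F \<longrightarrow> (\<exists>f\<in>F. E f y)" using F unfolding fD[of F] by blast+
  show ?thesis
  proof (cases "F \<inter> S = {}")
    case False
    then obtain s0 where s0: "s0 \<in> F" "s0 \<in> S" by blast
    have SF: "S \<subseteq> F"
    proof
      fix s assume s: "s \<in> S"
      show "s \<in> F"
      proof (rule ccontr)
        assume "s \<notin> F"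
        moreover have "s \<in> V" using s SV by blast
        ultimately obtain f where f: "f \<in> F" "E f s" using Fmax by blast
        have "E s f" using Esym[OF f(2)] .
        then have "f \<in> N \<and> f \<notin> S" using K1[OF s] by blast
        then have "E s0 f" using K1[OF s0(2)] by blast
        then show False using FD s0 f unfolding iD[of F] by blast
      qed
    qed
    define F' where "F' = F - S"
    have F'N: "F' \<subseteq> V - N"
    proof
      fix f assume f: "f \<in> F'"
      then have "f \<in> F" "f \<notin> S" unfolding F'_def by auto
      moreover have "\<not> E s0 f" using FD s0 \<open>f \<in> F\<close> unfolding iD[of F] by blast
      ultimately have "f \<notin> N" using K1[OF s0(2), of f] by blast
      moreover have "F \<subseteq> V" using FD unfolding iD[of F] by blast
      ultimately show "f \<in> V - N" using \<open>f \<in> F\<close> by blast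
    qed
    have "\<forall>x\<in>F. \<forall>y\<in>F. \<not> E x y" using FD unfolding iD[of F] by blast
    then have "F' \<in> D1" unfolding iD1 using F'N unfolding F'_def by blast
    moreover have "\<exists>f\<in>F'. E f y" if y: "y \<in> V - N" "y \<notin> F'" for y
    proof -
      have "y \<notin> F" using y SN unfolding F'_def by blast
      then obtain f where f: "f \<in> F" "E f y" using Fmax y by blast
      have "f \<notin> S"
      proof
        assume "f \<in> S"
        then have "y \<in> N" using K1[of f y] f(2) by blast
        then show False using y by blast
      qed
      then show ?thesis using f unfolding F'_def by blast
    qed
    ultimately have "F' \<in> facets D1" unfolding fD1[of F'] by blast
    moreover have "F = S \<union> F'" using SF unfolding F'_def by blast
    ultimately show ?thesis by blast
  next
    case True
    have "F \<in> D2" using FD True unfolding iD[of F] iD2[of F] by blast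
    moreover have "\<exists>f\<in>F. E f y" if y: "y \<in> V - S" "y \<notin> F" for y
      using Fmax y by blast
    ultimately have F2: "F \<in> facets D2" unfolding fD2[of F] by blast
    have "F \<inter> N \<noteq> {}"
    proof
      assume FN: "F \<inter> N = {}"
      have "x0 \<notin> F" using True x0 by blast
      moreover have "x0 \<in> V" using x0 SV by blast
      ultimately obtain f where f: "f \<in> F" "E f x0" using Fmax by blast
      have "E x0 f" using Esym[OF f(2)] .
      then have "f \<in> N" using K1[OF x0] by blast
      then show False using FN f by blast
    qed
    then show ?thesis using F2 by blast
  qed
  qed
  define Q where "Q = (\<lambda>G::'a set. G \<inter> N \<noteq> {})"
  define Fs where "Fs = map ((\<union>) S) L1 @ filter Q L2"
  have L2sub: "G \<subseteq> V - S" if "G \<in> set L2" for G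
  proof -
    have "G \<in> facets D2" using that L2(2) by simp
    then show ?thesis unfolding fD2[of G] iD2[of G] by blast
  qed
  have setFs: "set Fs = facets D"
  proof (rule equalityI)
    show "set Fs \<subseteq> facets D"
    proof
      fix G assume "G \<in> set Fs"
      then have "G \<in> (\<union>) S ` set L1 \<or> (G \<in> set L2 \<and> Q G)" unfolding Fs_def by auto
      then show "G \<in> facets D"
      proof
        assume "G \<in> (\<union>) S ` set L1"
        then obtain F' where "F' \<in> facets D1" "G = S \<union> F'" using L1(2) by blast
        then show ?thesis using T1 by blast
      next
        assume "G \<in> set L2 \<and> Q G"
        then show ?thesis using T2 L2(2) unfolding Q_def by blast
      qed
    qed
  next
    show "facets D \<subseteq> set Fs"
    proof
      fix G assume "G \<in> facets D"
      then have "(\<exists>F'\<in>facets D1. G = S \<union> F') \<or> (G \<in> facets D2 \<and> G \<inter> N \<noteq> {})" by (rule T3)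
      then show "G \<in> set Fs" unfolding Fs_def Q_def using L1(2) L2(2) by auto
    qed
  qed
  have distFs: "distinct Fs"
  proof -
    have "inj_on ((\<union>) S) (set L1)"
    proof (rule inj_onI)
      fix a b assume ab: "a \<in> set L1" "b \<in> set L1" "S \<union> a = S \<union> b"
      have "S \<inter> a = {}" "S \<inter> b = {}" using D1S ab(1,2) L1(2) by blast+
      then show "a = b" using ab(3) by blast
    qed
    then have "distinct (map ((\<union>) S) L1)" using L1(1) by (simp add: distinct_map)
    moreover have "distinct (filter Q L2)" using L2(1) by simp
    moreover have "set (map ((\<union>) S) L1) \<inter> set (filter Q L2) = {}"
    proof -
      have "x0 \<in> G" if "G \<in> set (map ((\<union>) S) L1)" for G using that x0 by auto
      moreover have "x0 \<notin> G" if "G \<in> set (filter Q L2)" for G using that L2sub x0 by auto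
      ultimately show ?thesis by blast
    qed
    ultimately show ?thesis unfolding Fs_def by simp
  qed
  have part2: "cnd k F ((\<union>) S ` set L1 \<union> set (filter Q a))" if h: "L2 = a @ F # b" "Q F" for a F b
  proof -
    have FD2: "F \<in> facets D2" using h(1) L2(2) by (metis in_set_conv_decomp)
    have FD2': "F \<in> D2" using FD2 unfolding fD2[of F] by blast
    have FVS: "F \<subseteq> V - S" and Find: "\<forall>x\<in>F. \<forall>y\<in>F. \<not> E x y" using FD2' unfolding iD2[of F] by blast+
    have QF: "F \<inter> N \<noteq> {}" using h(2) unfolding Q_def .
    obtain A where A: "A \<in> P" "A \<noteq> S" "F \<inter> N = A" using partF[OF FD2 QF] by blast
    have cardA: "card A = k" using P3 A(1) by blast
    have finF: "finite F" using FVS finV finite_subset by blast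
    define R where "R = F - N"
    have FAR: "F = A \<union> R" "A \<inter> R = {}" using A(3) unfolding R_def by blast+
    have finR: "finite R" using finF unfolding R_def by simp
    have finA: "finite A" using finF A(3) by blast
    have cardF: "card F = k + card R" using card_Un_disjoint[OF finA finR FAR(2)] FAR(1) cardA by simp
    have RD1: "R \<in> D1" unfolding iD1[of R] using FVS Find unfolding R_def by blast
    obtain F1 where F1: "F1 \<in> facets D1" "R \<subseteq> F1"
      using facet_exists[of "V - N" R E] finV RD1 unfolding D1_def by blast
    have F1L: "F1 \<in> set L1" using F1(1) L1(2) by simp
    have aD2: "G \<in> facets D2" if "G \<in> set a" for G using that h(1) L2(2) by auto
    have Gam: "gen {F} \<inter> gen ((\<union>) S ` set L1 \<union> set (filter Q a)) = gen ((\<lambda>G. F \<inter> G) ` set a) \<union> gen {R}"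
      unfolding gen_Int
    proof (rule equalityI)
      show "gen ((\<inter>) F ` ((\<union>) S ` set L1 \<union> set (filter Q a))) \<subseteq> gen ((\<inter>) F ` set a) \<union> gen {R}"
      proof
        fix Z assume "Z \<in> gen ((\<inter>) F ` ((\<union>) S ` set L1 \<union> set (filter Q a)))"
        then obtain G where G: "G \<in> (\<union>) S ` set L1 \<union> set (filter Q a)" "Z \<subseteq> F \<inter> G"
          unfolding gen_def by blast
        show "Z \<in> gen ((\<inter>) F ` set a) \<union> gen {R}"
        proof (cases "G \<in> set (filter Q a)")
          case True
          then have "G \<in> set a" by simp
          then have "Z \<in> gen ((\<inter>) F ` set a)" using G(2) unfolding gen_def by blast
          then show ?thesis by blast
        next
          case False
          then obtain F' where F': "F' \<in> set L1" "G = S \<union> F'" using G(1) by blast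
          have "F' \<subseteq> V - N" using D1sub F'(1) L1(2) by blast
          then have "F \<inter> G \<subseteq> R" using F'(2) FVS unfolding R_def by blast
          then have "Z \<in> gen {R}" using G(2) unfolding gen_def by blast
          then show ?thesis by blast
        qed
      qed
    next
      show "gen ((\<inter>) F ` set a) \<union> gen {R} \<subseteq> gen ((\<inter>) F ` ((\<union>) S ` set L1 \<union> set (filter Q a)))"
      proof
        fix Z assume "Z \<in> gen ((\<inter>) F ` set a) \<union> gen {R}"
        then have "(\<exists>G\<in>set a. Z \<subseteq> F \<inter> G) \<or> Z \<subseteq> R" unfolding gen_def by blast
        then show "Z \<in> gen ((\<inter>) F ` ((\<union>) S ` set L1 \<union> set (filter Q a)))"
        proof
          assume "\<exists>G\<in>set a. Z \<subseteq> F \<inter> G"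
          then obtain G where G: "G \<in> set a" "Z \<subseteq> F \<inter> G" by blast
          show ?thesis
          proof (cases "Q G")
            case True
            then have "G \<in> set (filter Q a)" using G(1) by simp
            then show ?thesis using G(2) unfolding gen_def by blast
          next
            case False
            have GD2: "G \<in> D2" using aD2[OF G(1)] unfolding fD2[of G] by blast
            have "G \<subseteq> V - N" "\<forall>x\<in>G. \<forall>y\<in>G. \<not> E x y"
              using GD2 False unfolding iD2[of G] Q_def by blast+
            then have "G \<in> D1" unfolding iD1[of G] by blast
            then obtain F'' where F'': "F'' \<in> facets D1" "G \<subseteq> F''"
              using facet_exists[of "V - N" G E] finV unfolding D1_def by blast
            then have "S \<union> F'' \<in> (\<union>) S ` set L1" using L1(2) by blast
            moreover have "Z \<subseteq> F \<inter> (S \<union> F'')" using G(2) F''(2) by blast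
            ultimately show ?thesis unfolding gen_def by blast
          qed
        next
          assume "Z \<subseteq> R"
          then have "Z \<subseteq> F \<inter> (S \<union> F1)" using F1(2) unfolding R_def by blast
          moreover have "S \<union> F1 \<in> (\<union>) S ` set L1" using F1L by blast
          ultimately show ?thesis unfolding gen_def by blast
        qed
      qed
    qed
    obtain B0 where B0a: "gen ((\<lambda>G. F \<inter> G) ` set a) = gen B0"
      and B0b: "\<forall>\<sigma>\<in>B0. \<sigma> \<subseteq> F \<and> int (card \<sigma>) = int (card F) - int k"
      and B0c: "card (facets (gen B0)) > 1 \<longrightarrow> (\<forall>\<sigma>\<in>facets (gen B0). \<forall>\<tau>\<in>facets (gen B0). \<sigma> \<noteq> \<tau> \<longrightarrow> F \<subseteq> \<sigma> \<union> \<tau>)"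
    proof (cases "a = []")
      case True
      have g0: "gen {} = {}" unfolding gen_def by simp
      have f0: "facets {} = {}" unfolding facets_def by simp
      show ?thesis by (rule that[of "{}"]) (simp_all add: True g0 f0)
    next
      case False
      then have c: "cnd k F (set a)" using L2(3) h(1) by blast
      have cc: "(\<exists>B. B \<noteq> {} \<and> (\<forall>\<sigma>\<in>B. \<sigma> \<subseteq> F \<and> int (card \<sigma>) = int (card F) - int k)
               \<and> gen {F} \<inter> gen (set a) = gen B)
          \<and> (card (facets (gen {F} \<inter> gen (set a))) > 1 \<longrightarrow>
               (\<forall>\<sigma>\<in>facets (gen {F} \<inter> gen (set a)). \<forall>\<tau>\<in>facets (gen {F} \<inter> gen (set a)). \<sigma> \<noteq> \<tau> \<longrightarrow> F \<subseteq> \<sigma> \<union> \<tau>))"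
        using c unfolding cnd_def Let_def .
      obtain B where B0: "B \<noteq> {} \<and> (\<forall>\<sigma>\<in>B. \<sigma> \<subseteq> F \<and> int (card \<sigma>) = int (card F) - int k)
               \<and> gen {F} \<inter> gen (set a) = gen B" using cc[THEN conjunct1] by (rule exE)
      note B3 = B0[THEN conjunct2, THEN conjunct2]
      show ?thesis
      proof (rule that[of B])
        show "gen ((\<inter>) F ` set a) = gen B" using B3 unfolding gen_Int .
        show "\<forall>\<sigma>\<in>B. \<sigma> \<subseteq> F \<and> int (card \<sigma>) = int (card F) - int k" using B0[THEN conjunct2, THEN conjunct1] .
        show "card (facets (gen B)) > 1 \<longrightarrow> (\<forall>\<sigma>\<in>facets (gen B). \<forall>\<tau>\<in>facets (gen B). \<sigma> \<noteq> \<tau> \<longrightarrow> F \<subseteq> \<sigma> \<union> \<tau>)"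
          using cc[THEN conjunct2] unfolding B3 .
      qed
    qed
    have finB0: "\<forall>\<sigma>\<in>B0. finite \<sigma>"
    proof
      fix \<sigma> assume "\<sigma> \<in> B0"
      then have "\<sigma> \<subseteq> F" using B0b by simp
      then show "finite \<sigma>" using finF by (rule finite_subset)
    qed
    have cardB0: "card \<sigma> = card R" if "\<sigma> \<in> B0" for \<sigma>
    proof -
      have "int (card \<sigma>) = int (card F) - int k" using B0b that by simp
      then show ?thesis using cardF by simp
    qed
    have cB0: "\<forall>\<sigma>\<in>B0. \<forall>\<tau>\<in>B0. card \<sigma> = card \<tau>" using cardB0 by simp
    have fB0: "facets (gen B0) = B0" using facets_gen[OF finB0 cB0] .
    define B where "B = B0 \<union> {R}"
    have finB: "\<forall>\<sigma>\<in>B. finite \<sigma>" using finB0 finR unfolding B_def by simp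
    have cB: "\<forall>\<sigma>\<in>B. \<forall>\<tau>\<in>B. card \<sigma> = card \<tau>" using cardB0 unfolding B_def by simp
    have fB: "facets (gen B) = B" using facets_gen[OF finB cB] .
    have GamB: "gen {F} \<inter> gen ((\<union>) S ` set L1 \<union> set (filter Q a)) = gen B"
      unfolding Gam B0a B_def gen_Un ..
    have RF: "R \<subseteq> F" unfolding R_def by blast
    have p1: "B \<noteq> {}" unfolding B_def by simp
    have p2: "\<forall>\<sigma>\<in>B. \<sigma> \<subseteq> F \<and> int (card \<sigma>) = int (card F) - int k"
      using B0b RF cardF unfolding B_def by simp
    have keyR: "A \<subseteq> \<sigma>" if s: "\<sigma> \<in> B0" "\<sigma> \<noteq> R" for \<sigma>
    proof -
      have "\<sigma> \<in> gen B0" using s(1) unfolding gen_def by blast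
      then have "\<sigma> \<in> gen ((\<inter>) F ` set a)" unfolding B0a .
      then obtain G where G: "G \<in> set a" "\<sigma> \<subseteq> F \<inter> G" unfolding gen_def by blast
      have "F \<inter> G \<in> gen ((\<inter>) F ` set a)" using G(1) unfolding gen_def by blast
      then have "F \<inter> G \<in> gen B0" unfolding B0a .
      moreover have "\<sigma> \<in> facets (gen B0)" using s(1) fB0 by simp
      ultimately have sFG: "\<sigma> = F \<inter> G" using G(2) unfolding facets_def by blast
      show ?thesis
      proof (cases "G \<inter> A = {}")
        case True
        then have "\<sigma> \<subseteq> R" using sFG FAR by blast
        moreover have "card \<sigma> = card R" using cardB0 s(1) .
        ultimately have "\<sigma> = R" using card_subset_eq[OF finR] by blast
        then show ?thesis using s(2) by blast
      next
        case False
        then obtain z where z: "z \<in> G" "z \<in> A" by blast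
        have "A \<subseteq> G" using partmax[OF aD2[OF G(1)] A(1) A(2) z] .
        then show ?thesis using sFG FAR by blast
      qed
    qed
    have p3: "\<forall>\<sigma>\<in>B. \<forall>\<tau>\<in>B. \<sigma> \<noteq> \<tau> \<longrightarrow> F \<subseteq> \<sigma> \<union> \<tau>"
    proof (intro ballI impI)
      fix \<sigma> \<tau> assume st: "\<sigma> \<in> B" "\<tau> \<in> B" "\<sigma> \<noteq> \<tau>"
      show "F \<subseteq> \<sigma> \<union> \<tau>"
      proof (cases "\<sigma> \<in> B0 \<and> \<tau> \<in> B0")
        case True
        have finBB0: "finite B0"
        proof (rule finite_subset[of B0 "Pow F"])
          show "B0 \<subseteq> Pow F" using B0b by blast
          show "finite (Pow F)" using finF by simp
        qed
        have "card {\<sigma>, \<tau>} \<le> card B0" using True finBB0 by (intro card_mono) auto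
        then have "card B0 > 1" using st(3) by simp
        then have "\<forall>\<sigma>\<in>B0. \<forall>\<tau>\<in>B0. \<sigma> \<noteq> \<tau> \<longrightarrow> F \<subseteq> \<sigma> \<union> \<tau>" using B0c unfolding fB0 by blast
        then show ?thesis using True st(3) by blast
      next
        case False
        then have "\<sigma> = R \<or> \<tau> = R" using st(1,2) unfolding B_def by blast
        then show ?thesis
        proof
          assume sR: "\<sigma> = R"
          then have "\<tau> \<in> B0" "\<tau> \<noteq> R" using st unfolding B_def by blast+
          then have "A \<subseteq> \<tau>" by (rule keyR)
          then show ?thesis using sR FAR by blast
        next
          assume tR: "\<tau> = R"
          then have "\<sigma> \<in> B0" "\<sigma> \<noteq> R" using st unfolding B_def by blast+
          then have "A \<subseteq> \<sigma>" by (rule keyR)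
          then show ?thesis using tR FAR by blast
        qed
      qed
    qed
    have "\<exists>B. B \<noteq> {} \<and> (\<forall>\<sigma>\<in>B. \<sigma> \<subseteq> F \<and> int (card \<sigma>) = int (card F) - int k)
               \<and> gen {F} \<inter> gen ((\<union>) S ` set L1 \<union> set (filter Q a)) = gen B"
      using p1 p2 GamB by blast
    moreover have "card (facets (gen {F} \<inter> gen ((\<union>) S ` set L1 \<union> set (filter Q a)))) > 1 \<longrightarrow>
      (\<forall>\<sigma>\<in>facets (gen {F} \<inter> gen ((\<union>) S ` set L1 \<union> set (filter Q a))).
        \<forall>\<tau>\<in>facets (gen {F} \<inter> gen ((\<union>) S ` set L1 \<union> set (filter Q a))). \<sigma> \<noteq> \<tau> \<longrightarrow> F \<subseteq> \<sigma> \<union> \<tau>)"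
      unfolding GamB fB using p3 by blast
    ultimately show ?thesis unfolding cnd_def Let_def by (rule conjI)
  qed
  have condFs: "\<forall>xs F ys. Fs = xs @ F # ys \<longrightarrow> xs \<noteq> [] \<longrightarrow> cnd k F (set xs)"
  proof (intro allI impI)
    fix xs F ys assume sp: "Fs = xs @ F # ys" "xs \<noteq> []"
    have "map ((\<union>) S) L1 @ filter Q L2 = xs @ F # ys" using sp(1) unfolding Fs_def .
    then have "(\<exists>a x b. L1 = a @ x # b \<and> xs = map ((\<union>) S) a \<and> F = S \<union> x) \<or>
      (\<exists>c d. filter Q L2 = c @ F # d \<and> xs = map ((\<union>) S) L1 @ c)" by (rule list_split)
    then show "cnd k F (set xs)"
    proof
      assume "\<exists>a x b. L1 = a @ x # b \<and> xs = map ((\<union>) S) a \<and> F = S \<union> x"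
      then obtain a x b where ax: "L1 = a @ x # b" "xs = map ((\<union>) S) a" "F = S \<union> x" by blast
      have "a \<noteq> []" using sp(2) ax(2) by simp
      then have c: "cnd k x (set a)" using L1(3) ax(1) by blast
      have xL: "x \<in> facets D1" using ax(1) L1(2) by (metis in_set_conv_decomp)
      have finx: "finite x" using D1sub[OF xL] finV finite_subset by blast
      have dP: "\<forall>G\<in>set a. S \<inter> G = {}"
      proof
        fix G assume "G \<in> set a"
        then have "G \<in> facets D1" using ax(1) L1(2) by auto
        then show "S \<inter> G = {}" by (rule D1S)
      qed
      have "cnd k (S \<union> x) ((\<union>) S ` set a)" by (rule cnd_join[OF finS finx D1S[OF xL] dP c])
      then show ?thesis using ax(2,3) by simp
    next
      assume "\<exists>c d. filter Q L2 = c @ F # d \<and> xs = map ((\<union>) S) L1 @ c"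
      then obtain c d where cd: "filter Q L2 = c @ F # d" "xs = map ((\<union>) S) L1 @ c" by blast
      obtain a b where ab: "L2 = a @ F # b" "filter Q a = c" "Q F" using filter_split[OF cd(1)] by blast
      have "cnd k F ((\<union>) S ` set L1 \<union> set (filter Q a))" by (rule part2[OF ab(1) ab(3)])
      then show ?thesis using cd(2) ab(2) by simp
    qed
  qed
  have SD: "S \<in> D" unfolding iD[of S] using SV Sind by blast
  have "k_shellable k D" unfolding ks_iff
    using k1 SD cardS distFs setFs condFs by blast
  then show ?thesis unfolding k_shellable_graph_def D_def .
qed
end
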